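(* Let $f:\mathbb{F}_2^{\,n}\to\mathbb{R}$, let $s\ge 1$ and $d$ be integers, and let $H\le\mathbb{F}_2^{\,n}$ be a subspace of codimension $d$ drawn uniformly at random. Consider the $2^d$ cosets (buckets) of $H$, with bucket energies indexed so that $y_1\ge y_2\ge\dots\ge y_{2^d}$, and for each bucket $i$ let $y_i^*$ be the energy of the largest Fourier coefficient in that bucket, and $z_i=y_i-y_i^*$. Then $$\mathbb{E}_H\left[\sum_{i=1}^s z_i\right]\le\sqrt{\frac{2s}{2^d}}\,\|f\|_2^2.$$
   Context: $\hat f(\alpha)=\frac{1}{2^n}\sum_x f(x)(-1)^{\alpha\cdot x}$ and $\|f\|_2^2=\frac{1}{2^n}\sum_x f(x)^2=\sum_\alpha\hat f(\alpha)^2$. The energy of a Fourier coefficient is $\hat f(\alpha)^2$. For a coset $C=a+H$ of $H$, its energy is $y=\sum_{\beta\in C}\hat f(\beta)^2$ and $y^*=\max_{\beta\in C}\hat f(\beta)^2$. *)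

theory Defs
  imports Complex_Main "HOL-Library.Cardinality"
begin

text \<open>Vectors of F_2^n are modelled as functions 'n => bool (n = CARD('n)),
  with addition = coordinatewise xor.\<close>

definition vadd :: "('n \<Rightarrow> bool) \<Rightarrow> ('n \<Rightarrow> bool) \<Rightarrow> ('n \<Rightarrow> bool)" where
  "vadd x y = (\<lambda>i. x i \<noteq> y i)"

definition vzero :: "'n \<Rightarrow> bool" where
  "vzero = (\<lambda>i. False)"

text \<open>Inner product over F_2 as a count; only its parity matters since we
  use (-1)^(alpha . x).\<close>
definition dotp :: "('n::finite \<Rightarrow> bool) \<Rightarrow> ('n \<Rightarrow> bool) \<Rightarrow> nat" where
  "dotp a x = card {i. a i \<and> x i}"

definition fourier :: "(('n::finite \<Rightarrow> bool) \<Rightarrow> real) \<Rightarrow> ('n \<Rightarrow> bool) \<Rightarrow> real" where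
  "fourier f a = (1 / 2 ^ CARD('n)) * (\<Sum>x\<in>UNIV. f x * (-1) ^ dotp a x)"

definition norm2sq :: "(('n::finite \<Rightarrow> bool) \<Rightarrow> real) \<Rightarrow> real" where
  "norm2sq f = (1 / 2 ^ CARD('n)) * (\<Sum>x\<in>UNIV. (f x)\<^sup>2)"

text \<open>F_2-linear subspace (closure under scalars 0,1 is automatic).\<close>
definition is_subspace :: "('n \<Rightarrow> bool) set \<Rightarrow> bool" where
  "is_subspace H \<longleftrightarrow> vzero \<in> H \<and> (\<forall>x\<in>H. \<forall>y\<in>H. vadd x y \<in> H)"

definition subspaces_codim :: "nat \<Rightarrow> ('n::finite \<Rightarrow> bool) set set" where
  "subspaces_codim d = {H. is_subspace H \<and> card H = 2 ^ (CARD('n) - d)}"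

definition coset :: "('n \<Rightarrow> bool) \<Rightarrow> ('n \<Rightarrow> bool) set \<Rightarrow> ('n \<Rightarrow> bool) set" where
  "coset a H = vadd a ` H"

definition cosets :: "('n \<Rightarrow> bool) set \<Rightarrow> ('n \<Rightarrow> bool) set set" where
  "cosets H = (\<lambda>a. coset a H) ` UNIV"

definition energy :: "(('n::finite \<Rightarrow> bool) \<Rightarrow> real) \<Rightarrow> ('n \<Rightarrow> bool) set \<Rightarrow> real" where
  "energy f C = (\<Sum>b\<in>C. (fourier f b)\<^sup>2)"

definition max_energy :: "(('n::finite \<Rightarrow> bool) \<Rightarrow> real) \<Rightarrow> ('n \<Rightarrow> bool) set \<Rightarrow> real" where
  "max_energy f C = Max ((\<lambda>b. (fourier f b)\<^sup>2) ` C)"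

definition zval :: "(('n::finite \<Rightarrow> bool) \<Rightarrow> real) \<Rightarrow> ('n \<Rightarrow> bool) set \<Rightarrow> real" where
  "zval f C = energy f C - max_energy f C"

end

theory Submission
  imports Defs "HOL-Analysis.Convex"
begin


lemma vadd_comm: "vadd x y = vadd y x" unfolding vadd_def by auto
lemma vadd_assoc: "vadd (vadd x y) z = vadd x (vadd y z)" unfolding vadd_def by auto
lemma vadd_self: "vadd x x = vzero" unfolding vadd_def vzero_def by auto
lemma vadd_zero[simp]: "vadd x vzero = x" "vadd vzero x = x" unfolding vadd_def vzero_def by auto
lemma vadd_cancel[simp]: "vadd x (vadd x y) = y" "vadd (vadd y x) x = y" unfolding vadd_def by auto
lemma vadd_eq_zero: "vadd x y = vzero \<longleftrightarrow> x = y" unfolding vadd_def vzero_def by (auto simp: fun_eq_iff)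
lemma inj_vadd: "inj (vadd a)" by (metis injI vadd_cancel(1))
lemma bij_vadd: "bij (vadd a)" by (metis bij_betw_def inj_vadd surjI vadd_cancel(1))
lemma bij_vadd2: "bij (\<lambda>x. vadd x a)" by (metis (no_types, lifting) bij_vadd bij_betw_cong vadd_comm)

definition chi :: "('n::finite \<Rightarrow> bool) \<Rightarrow> ('n \<Rightarrow> bool) \<Rightarrow> real" where
  "chi a x = (-1) ^ dotp a x"

lemma dotp_comm: "dotp a x = dotp x a" unfolding dotp_def by (metis (mono_tags, lifting) Collect_cong)

lemma dotp_add: "dotp a x + dotp a y = dotp a (vadd x y) + 2 * card {i. a i \<and> x i \<and> y i}"
proof -
  let ?A = "{i. a i \<and> x i \<and> \<not> y i}" and ?B = "{i. a i \<and> \<not> x i \<and> y i}" and ?C = "{i. a i \<and> x i \<and> y i}"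
  have 1: "dotp a x = card ?A + card ?C" unfolding dotp_def
    by (subst card_Un_disjoint[symmetric]) (auto intro: arg_cong[where f=card])
  have 2: "dotp a y = card ?B + card ?C" unfolding dotp_def
    by (subst card_Un_disjoint[symmetric]) (auto intro: arg_cong[where f=card])
  have 3: "dotp a (vadd x y) = card ?A + card ?B" unfolding dotp_def vadd_def
    by (subst card_Un_disjoint[symmetric]) (auto intro: arg_cong[where f=card])
  show ?thesis using 1 2 3 by simp
qed

lemma chi_mult: "chi a x * chi a y = chi a (vadd x y)"
  unfolding chi_def by (simp add: power_add[symmetric] dotp_add power_mult power_add)

lemma chi_sym: "chi a x = chi x a" unfolding chi_def using dotp_comm by metis

lemma chi_sum: "(\<Sum>a\<in>UNIV. chi a z) = (if z = vzero then 2 ^ CARD('n) else 0)"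
  for z :: "'n::finite \<Rightarrow> bool"
proof (cases "z = vzero")
  case True
  have "chi a vzero = 1" for a :: "'n \<Rightarrow> bool" unfolding chi_def dotp_def vzero_def by simp
  then show ?thesis using True by (simp add: card_fun)
next
  case False
  then obtain i where zi: "z i" unfolding vzero_def by auto
  define e :: "'n \<Rightarrow> bool" where "e = (\<lambda>k. k = i)"
  have ce: "chi z e = -1" unfolding chi_def dotp_def e_def using zi
    by (simp add: Collect_conv_if)
  have "(\<Sum>a\<in>UNIV. chi a z) = (\<Sum>a\<in>UNIV. chi (vadd a e) z)"
    using sum.reindex[OF bij_is_inj[OF bij_vadd2[of e]], of "\<lambda>a. chi a z"]
    by (simp add: bij_is_surj[OF bij_vadd2[of e]] comp_def)
  also have "\<dots> = (\<Sum>a\<in>UNIV. - chi a z)"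
    by (rule sum.cong) (auto simp: chi_sym[of _ z] chi_mult[symmetric] ce)
  finally show ?thesis using False by (simp add: sum_negf)
qed

lemma parseval: "(\<Sum>a\<in>UNIV. (fourier f a)\<^sup>2) = norm2sq f"
  for f :: "('n::finite \<Rightarrow> bool) \<Rightarrow> real"
proof -
  define c :: real where "c = 1 / 2 ^ CARD('n)"
  have "(\<Sum>a\<in>UNIV. (fourier f a)\<^sup>2) = c^2 * (\<Sum>a\<in>UNIV. (\<Sum>x\<in>UNIV. f x * chi a x)\<^sup>2)"
    unfolding fourier_def c_def chi_def
    by (simp only: power_mult_distrib sum_distrib_left[symmetric])
  also have "\<dots> = c^2 * (\<Sum>a\<in>UNIV. \<Sum>x\<in>UNIV. \<Sum>y\<in>UNIV. f x * f y * chi a (vadd x y))"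
    by (simp add: power2_eq_square sum_product chi_mult[symmetric] mult_ac)
  also have "\<dots> = c^2 * (\<Sum>x\<in>UNIV. \<Sum>y\<in>UNIV. f x * f y * (\<Sum>a\<in>UNIV. chi a (vadd x y)))"
  proof -
    have "(\<Sum>a\<in>UNIV. \<Sum>x\<in>UNIV. \<Sum>y\<in>UNIV. f x * f y * chi a (vadd x y))
        = (\<Sum>x\<in>UNIV. \<Sum>a\<in>UNIV. \<Sum>y\<in>UNIV. f x * f y * chi a (vadd x y))"
      by (rule sum.swap)
    also have "\<dots> = (\<Sum>x\<in>UNIV. \<Sum>y\<in>UNIV. \<Sum>a\<in>UNIV. f x * f y * chi a (vadd x y))"
      by (rule sum.cong[OF refl], rule sum.swap)
    also have "\<dots> = (\<Sum>x\<in>UNIV. \<Sum>y\<in>UNIV. f x * f y * (\<Sum>a\<in>UNIV. chi a (vadd x y)))"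
      by (simp only: sum_distrib_left)
    finally show ?thesis by simp
  qed
  also have "\<dots> = c^2 * (\<Sum>x\<in>UNIV. f x * f x * 2 ^ CARD('n))"
  proof -
    have "\<And>x. (\<Sum>y\<in>UNIV. f x * f y * (\<Sum>a\<in>UNIV. chi a (vadd x y))) = f x * f x * 2 ^ CARD('n)"
    proof -
      fix x
      have "(\<Sum>y\<in>UNIV. f x * f y * (\<Sum>a\<in>UNIV. chi a (vadd x y)))
          = (\<Sum>y\<in>UNIV. if x = y then f x * f y * 2 ^ CARD('n) else 0)"
        by (rule sum.cong[OF refl]) (simp only: chi_sum vadd_eq_zero, simp)
      also have "\<dots> = f x * f x * 2 ^ CARD('n)" by simp
      finally show "?thesis x" .
    qed
    then show ?thesis by simp
  qed
  also have "\<dots> = norm2sq f"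
  proof -
    have "(\<Sum>x\<in>UNIV. f x * f x * 2 ^ CARD('n)) = (\<Sum>x\<in>UNIV. (f x)\<^sup>2) * 2 ^ CARD('n)"
      by (simp add: sum_distrib_right power2_eq_square)
    then show ?thesis unfolding norm2sq_def c_def by (simp add: power2_eq_square)
  qed
  finally show ?thesis .
qed



lemma sub_add: "is_subspace H \<Longrightarrow> x \<in> H \<Longrightarrow> y \<in> H \<Longrightarrow> vadd x y \<in> H"
  unfolding is_subspace_def by auto
lemma sub_zero: "is_subspace H \<Longrightarrow> vzero \<in> H"
  unfolding is_subspace_def by auto

lemma mem_coset: "is_subspace H \<Longrightarrow> x \<in> coset b H \<longleftrightarrow> vadd b x \<in> H"
  unfolding coset_def by (auto intro: image_eqI[where x="vadd b x"])

lemma coset_eq: assumes "is_subspace H" shows "coset a H = coset b H \<longleftrightarrow> vadd a b \<in> H"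
proof
  assume "coset a H = coset b H"
  then have "a \<in> coset b H" using mem_coset[OF assms, of a a] sub_zero[OF assms] by (simp add: vadd_self)
  then show "vadd a b \<in> H" using mem_coset[OF assms] vadd_comm by metis
next
  assume ab: "vadd a b \<in> H"
  have "x \<in> coset a H \<longleftrightarrow> x \<in> coset b H" for x
  proof -
    have "vadd b x = vadd (vadd a b) (vadd a x)"
      by (metis vadd_assoc vadd_cancel(1) vadd_comm)
    moreover have "vadd a x = vadd (vadd a b) (vadd b x)"
      by (metis vadd_assoc vadd_cancel(1) vadd_comm)
    ultimately show ?thesis using mem_coset[OF assms] sub_add[OF assms] ab by metis
  qed
  then show "coset a H = coset b H" by blast
qed

lemma coset_class: "is_subspace H \<Longrightarrow> {x. coset x H = coset b H} = coset b H"
  using coset_eq mem_coset vadd_comm by blast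

lemma sum_coset: "sum g (coset a H) = (\<Sum>h\<in>H. g (vadd a h))"
  unfolding coset_def using sum.reindex[OF inj_on_subset[OF inj_vadd[of a] subset_UNIV[of H]], where g=g] by (simp add: comp_def)

lemma phi_exists:
  fixes u w :: "'n \<Rightarrow> bool"
  assumes "u \<noteq> vzero" "w \<noteq> vzero"
  shows "\<exists>\<phi>. (\<forall>x y. \<phi> (vadd x y) = (\<phi> x \<noteq> \<phi> y)) \<and> \<phi> u \<and> \<phi> w"
proof (cases "\<exists>i. u i \<and> w i")
  case True
  then obtain i where "u i" "w i" by blast
  then show ?thesis by (intro exI[where x="\<lambda>x. x i"]) (auto simp: vadd_def)
next
  case False
  obtain i where i: "u i" using assms(1) unfolding vzero_def by auto
  obtain j where j: "w j" using assms(2) unfolding vzero_def by auto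
  have "\<not> w i" "\<not> u j" using False i j by auto
  then show ?thesis using i j by (intro exI[where x="\<lambda>x. x i \<noteq> x j"]) (auto simp: vadd_def)
qed

definition cnt :: "nat \<Rightarrow> ('n::finite \<Rightarrow> bool) \<Rightarrow> nat" where
  "cnt d u = card {H \<in> subspaces_codim d. u \<in> H}"

lemma cnt_eq:
  fixes u w :: "'n::finite \<Rightarrow> bool"
  assumes "u \<noteq> vzero" "w \<noteq> vzero"
  shows "cnt d u = cnt d w"
proof -
  obtain \<phi> where lin: "\<And>x y. \<phi> (vadd x y) = (\<phi> x \<noteq> \<phi> y)" and pu: "\<phi> u" and pw: "\<phi> w"
    using phi_exists[OF assms] by blast
  define T where "T x = (if \<phi> x then vadd x (vadd u w) else x)" for x
  have puw: "\<not> \<phi> (vadd u w)" using lin pu pw by simp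
  have TT: "T (T x) = x" for x
    unfolding T_def using lin puw by auto
  have Tlin: "T (vadd x y) = vadd (T x) (T y)" for x y
    unfolding T_def using lin
    by (auto simp: vadd_assoc) (metis vadd_assoc vadd_comm vadd_cancel(1))+
  have Tu: "T u = w" unfolding T_def using pu by (simp flip: vadd_assoc add: vadd_self)
  have injT: "inj T" by (metis TT injI)
  have TH: "T ` H \<in> subspaces_codim d" if "H \<in> subspaces_codim d" for H
  proof -
    have sH: "is_subspace H" "card H = 2 ^ (CARD('n) - d)" using that unfolding subspaces_codim_def by auto
    have "T vzero = vzero" using Tlin[of vzero vzero] by (simp add: vadd_self)
    then have "is_subspace (T ` H)" using sH(1) unfolding is_subspace_def
      by (auto simp flip: Tlin) (metis image_eqI)+
    moreover have "card (T ` H) = card H" using injT by (simp add: card_image inj_on_subset)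
    ultimately show ?thesis using sH unfolding subspaces_codim_def by auto
  qed
  have TTH: "T ` (T ` H) = H" for H by (simp add: image_image TT)
  have img: "{H \<in> subspaces_codim d. w \<in> H} = (\<lambda>H. T ` H) ` {H \<in> subspaces_codim d. u \<in> H}"
  proof (intro equalityI subsetI)
    fix H assume "H \<in> {H \<in> subspaces_codim d. w \<in> H}"
    then have "H \<in> subspaces_codim d" "w \<in> H" by auto
    moreover have "u \<in> T ` H" using \<open>w \<in> H\<close> Tu TT by (metis image_eqI)
    ultimately show "H \<in> (\<lambda>H. T ` H) ` {H \<in> subspaces_codim d. u \<in> H}"
      using TH TTH by (metis (mono_tags, lifting) image_eqI mem_Collect_eq)
  next
    fix H assume "H \<in> (\<lambda>H. T ` H) ` {H \<in> subspaces_codim d. u \<in> H}"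
    then show "H \<in> {H \<in> subspaces_codim d. w \<in> H}" using TH Tu by auto
  qed
  have "inj_on (\<lambda>H. T ` H) X" for X by (metis TTH inj_on_inverseI)
  then show ?thesis unfolding cnt_def img by (simp add: card_image)
qed



lemma card_indicator: "finite A \<Longrightarrow> card {x\<in>A. P x} = (\<Sum>x\<in>A. if P x then 1 else 0 :: nat)"
  by (simp add: sum.inter_filter[symmetric])

lemma cnt_bound:
  fixes u :: "'n::finite \<Rightarrow> bool"
  assumes dn: "d \<le> CARD('n)" and u: "u \<noteq> vzero"
  shows "real (cnt d u) * 2 ^ d \<le> real (card (subspaces_codim d :: ('n \<Rightarrow> bool) set set))"
proof -
  define S where "S = (subspaces_codim d :: ('n \<Rightarrow> bool) set set)"
  define U where "U = (UNIV - {vzero} :: ('n \<Rightarrow> bool) set)"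
  define m where "m = CARD('n) - d"
  have finS: "finite S" by simp
  have "(\<Sum>h\<in>U. cnt d h) = (\<Sum>h\<in>U. \<Sum>H\<in>S. if h \<in> H then 1 else 0)"
    unfolding cnt_def S_def by (simp add: card_indicator)
  also have "\<dots> = (\<Sum>H\<in>S. \<Sum>h\<in>U. if h \<in> H then 1 else 0)" by (rule sum.swap)
  also have "\<dots> = (\<Sum>H\<in>S. card (H - {vzero}))"
  proof (rule sum.cong[OF refl])
    fix H assume "H \<in> S"
    have "H - {vzero} = {h \<in> U. h \<in> H}" unfolding U_def by auto
    then show "(\<Sum>h\<in>U. if h \<in> H then 1 else 0) = card (H - {vzero})"
      by (simp add: card_indicator)
  qed
  also have "\<dots> = (\<Sum>H\<in>S. 2 ^ m - 1)"
  proof (rule sum.cong[OF refl])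
    fix H assume "H \<in> S"
    then have "vzero \<in> H" "card H = 2 ^ m" unfolding S_def subspaces_codim_def is_subspace_def m_def by auto
    then show "card (H - {vzero}) = 2 ^ m - 1" by (simp add: card_Diff_singleton)
  qed
  finally have eq1: "(\<Sum>h\<in>U. cnt d h) = card S * (2 ^ m - 1)" by simp
  have "(\<Sum>h\<in>U. cnt d h) = card U * cnt d u"
    using cnt_eq[OF _ u] unfolding U_def by simp
  moreover have cU: "card U = 2 ^ CARD('n) - 1" unfolding U_def
    by (simp add: card_Diff_singleton card_fun)
  ultimately have eq2: "(2 ^ CARD('n) - 1) * cnt d u = card S * (2 ^ m - 1)" using eq1 by simp
  have m1: "(1::nat) \<le> 2 ^ m" by simp
  have n1: "(1::nat) \<le> 2 ^ CARD('n)" by simp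
  have "u \<in> U" unfolding U_def using u by simp
  then have "card U > 0" by (auto simp: card_gt_0_iff)
  then have "(1::nat) < 2 ^ CARD('n)" using cU by linarith
  then have "(1::real) < 2 ^ CARD('n)" by (metis of_nat_less_iff of_nat_1 of_nat_numeral of_nat_power)
  then have pos: "(2::real) ^ CARD('n) - 1 > 0" by linarith
  have eqR: "((2::real) ^ CARD('n) - 1) * real (cnt d u) = real (card S) * ((2::real) ^ m - 1)"
    using arg_cong[OF eq2, of real] m1 n1 by (simp add: of_nat_diff)
  have pm: "(2::real) ^ m * 2 ^ d = 2 ^ CARD('n)" unfolding m_def using dn
    by (simp add: power_add[symmetric])
  have d1: "(1::real) \<le> 2 ^ d" by simp
  have "((2::real) ^ CARD('n) - 1) * (real (cnt d u) * 2 ^ d) = (((2::real) ^ CARD('n) - 1) * real (cnt d u)) * 2 ^ d"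
    by (simp only: mult.assoc)
  also have "\<dots> = real (card S) * ((2::real) ^ m - 1) * 2 ^ d" using eqR by simp
  also have "\<dots> = real (card S) * ((2::real) ^ m * 2 ^ d - 2 ^ d)" by (simp add: algebra_simps)
  also have "\<dots> = real (card S) * ((2::real) ^ CARD('n) - 2 ^ d)" using pm by simp
  also have "\<dots> \<le> real (card S) * ((2::real) ^ CARD('n) - 1)" using d1 by (intro mult_left_mono) auto
  finally have "((2::real) ^ CARD('n) - 1) * (real (cnt d u) * 2 ^ d) \<le> ((2::real) ^ CARD('n) - 1) * card S"
    by (simp add: mult.commute)
  then show ?thesis using pos unfolding S_def by simp
qed



abbreviation en :: "(('n::finite \<Rightarrow> bool) \<Rightarrow> real) \<Rightarrow> ('n \<Rightarrow> bool) \<Rightarrow> real" where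
  "en f b \<equiv> (fourier f b)\<^sup>2"

lemma zval_sq:
  fixes C :: "('n::finite \<Rightarrow> bool) set"
  assumes "C \<noteq> {}"
  shows "(zval f C)\<^sup>2 \<le> (\<Sum>b\<in>C. en f b * (energy f C - en f b))"
proof -
  define y where "y = energy f C"
  define m where "m = max_energy f C"
  have fin: "finite C" by simp
  have mem: "m \<in> en f ` C" unfolding m_def max_energy_def using assms fin by (intro Max_in) auto
  have ge: "en f b \<le> m" if "b \<in> C" for b unfolding m_def max_energy_def using fin that by (intro Max_ge) auto
  have m0: "0 \<le> m" using mem by auto
  have my: "m \<le> y" using mem fin unfolding y_def energy_def
    by (auto intro: member_le_sum)
  have "(\<Sum>b\<in>C. en f b * en f b) \<le> (\<Sum>b\<in>C. m * en f b)"
    by (intro sum_mono mult_right_mono) (auto simp: ge)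
  also have "\<dots> = m * y" unfolding y_def energy_def by (simp add: sum_distrib_left)
  finally have sq: "(\<Sum>b\<in>C. en f b * en f b) \<le> m * y" .
  have "(\<Sum>b\<in>C. en f b * (energy f C - en f b)) = y * y - (\<Sum>b\<in>C. en f b * en f b)"
  proof -
    have "(\<Sum>b\<in>C. en f b * (y - en f b)) = (\<Sum>b\<in>C. en f b * y) - (\<Sum>b\<in>C. en f b * en f b)"
      by (simp add: right_diff_distrib sum_subtractf)
    moreover have "(\<Sum>b\<in>C. en f b * y) = y * y" by (simp add: sum_distrib_right[symmetric] y_def energy_def)
    ultimately show ?thesis unfolding y_def by simp
  qed
  moreover have "(zval f C)\<^sup>2 = (y - m)\<^sup>2" unfolding zval_def y_def m_def by simp
  moreover have "m * m \<le> m * y" using m0 my by (simp add: mult_left_mono)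
  ultimately show ?thesis using sq by (simp add: power2_eq_square algebra_simps)
qed

definition XH :: "(('n::finite \<Rightarrow> bool) \<Rightarrow> real) \<Rightarrow> ('n \<Rightarrow> bool) set \<Rightarrow> real" where
  "XH f H = (\<Sum>a\<in>UNIV. en f a * (energy f (coset a H) - en f a))"

lemma cosets_sum:
  assumes H: "is_subspace H"
  shows "(\<Sum>C\<in>cosets H. \<Sum>b\<in>C. en f b * (energy f C - en f b)) = XH f H"
proof -
  have "XH f H = (\<Sum>C\<in>cosets H. \<Sum>a\<in>{x. x \<in> UNIV \<and> coset x H = C}. en f a * (energy f (coset a H) - en f a))"
    unfolding XH_def cosets_def by (rule sum.image_gen) simp
  also have "\<dots> = (\<Sum>C\<in>cosets H. \<Sum>b\<in>C. en f b * (energy f C - en f b))"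
  proof (rule sum.cong[OF refl])
    fix C assume "C \<in> cosets H"
    then obtain c where C: "C = coset c H" unfolding cosets_def by auto
    have e: "{x. x \<in> UNIV \<and> coset x H = C} = C" using coset_class[OF H, of c] C by simp
    show "(\<Sum>a\<in>{x. x \<in> UNIV \<and> coset x H = C}. en f a * (energy f (coset a H) - en f a)) =
          (\<Sum>b\<in>C. en f b * (energy f C - en f b))"
    proof -
      have "coset b H = C" if "b \<in> C" for b using that coset_class[OF H, of c] C by blast
      then show ?thesis unfolding e by (intro sum.cong) auto
    qed
  qed
  finally show ?thesis by simp
qed

lemma XH_alt:
  assumes H: "is_subspace H"
  shows "XH f H = (\<Sum>a\<in>UNIV. en f a * (\<Sum>h\<in>H - {vzero}. en f (vadd a h)))"
proof -
  have "energy f (coset a H) - en f a = (\<Sum>h\<in>H - {vzero}. en f (vadd a h))" for a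
    unfolding energy_def sum_coset using sum.remove[of H vzero "\<lambda>h. en f (vadd a h)"] sub_zero[OF H]
    by simp
  then show ?thesis unfolding XH_def by simp
qed

lemma XH_nonneg: assumes H: "is_subspace H" shows "0 \<le> XH f H"
  unfolding XH_alt[OF H] by (intro sum_nonneg mult_nonneg_nonneg) auto



lemma swap_cnt:
  fixes g :: "('n::finite \<Rightarrow> bool) \<Rightarrow> real"
  shows "(\<Sum>H\<in>subspaces_codim d. \<Sum>h\<in>H - {vzero}. g h) = (\<Sum>h\<in>UNIV-{vzero}. real (cnt d h) * g h)"
proof -
  have "(\<Sum>H\<in>subspaces_codim d. \<Sum>h\<in>H - {vzero}. g h)
      = (\<Sum>H\<in>subspaces_codim d. \<Sum>h\<in>UNIV-{vzero}. if h \<in> H then g h else 0)"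
  proof (rule sum.cong[OF refl])
    fix H :: "('n \<Rightarrow> bool) set"
    have "H - {vzero} = {h \<in> UNIV - {vzero}. h \<in> H}" by auto
    then show "(\<Sum>h\<in>H - {vzero}. g h) = (\<Sum>h\<in>UNIV-{vzero}. if h \<in> H then g h else 0)"
      using sum.inter_filter[of "UNIV - {vzero}" g "\<lambda>h. h \<in> H"] by simp
  qed
  also have "\<dots> = (\<Sum>h\<in>UNIV-{vzero}. \<Sum>H\<in>subspaces_codim d. if h \<in> H then g h else 0)"
    by (rule sum.swap)
  also have "\<dots> = (\<Sum>h\<in>UNIV-{vzero}. real (cnt d h) * g h)"
  proof (rule sum.cong[OF refl])
    fix h :: "'n \<Rightarrow> bool"
    have "(\<Sum>H\<in>subspaces_codim d. if h \<in> H then g h else 0) = (\<Sum>H\<in>{H \<in> subspaces_codim d. h \<in> H}. g h)"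
      using sum.inter_filter[of "subspaces_codim d" "\<lambda>H. g h" "\<lambda>H. h \<in> H"] by simp
    then show "(\<Sum>H\<in>subspaces_codim d. if h \<in> H then g h else 0) = real (cnt d h) * g h"
      unfolding cnt_def by simp
  qed
  finally show ?thesis .
qed

lemma sumH_XH:
  fixes f :: "('n::finite \<Rightarrow> bool) \<Rightarrow> real"
  assumes dn: "d \<le> CARD('n)"
  shows "(\<Sum>H\<in>subspaces_codim d. XH f H)
     \<le> real (card (subspaces_codim d :: ('n \<Rightarrow> bool) set set)) / 2 ^ d * (norm2sq f)\<^sup>2"
proof -
  define N where "N = real (card (subspaces_codim d :: ('n \<Rightarrow> bool) set set))"
  define W where "W = norm2sq f"
  have W: "(\<Sum>b\<in>UNIV. en f b) = W" unfolding W_def by (rule parseval)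
  have shift: "(\<Sum>h\<in>UNIV. en f (vadd a h)) = W" for a
    using sum.reindex[OF bij_is_inj[OF bij_vadd[of a]], where g="en f"] W
    by (simp add: bij_is_surj[OF bij_vadd[of a]] comp_def)
  have inner: "(\<Sum>H\<in>subspaces_codim d. \<Sum>h\<in>H - {vzero}. en f (vadd a h)) \<le> N / 2 ^ d * W" for a
  proof -
    have "(\<Sum>H\<in>subspaces_codim d. \<Sum>h\<in>H - {vzero}. en f (vadd a h))
        = (\<Sum>h\<in>UNIV-{vzero}. real (cnt d h) * en f (vadd a h))" by (rule swap_cnt)
    also have "\<dots> \<le> (\<Sum>h\<in>UNIV-{vzero}. N / 2 ^ d * en f (vadd a h))"
    proof (rule sum_mono)
      fix h assume "h \<in> UNIV - {vzero :: 'n \<Rightarrow> bool}"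
      then have "real (cnt d h) * 2 ^ d \<le> N" unfolding N_def using cnt_bound[OF dn] by auto
      then have "real (cnt d h) \<le> N / 2 ^ d" by (simp add: field_simps)
      then show "real (cnt d h) * en f (vadd a h) \<le> N / 2 ^ d * en f (vadd a h)"
        by (intro mult_right_mono) auto
    qed
    also have "\<dots> \<le> (\<Sum>h\<in>UNIV. N / 2 ^ d * en f (vadd a h))"
      by (intro sum_mono2) (auto simp: N_def)
    also have "\<dots> = N / 2 ^ d * W" using shift[of a] by (simp only: sum_distrib_left[symmetric])
    finally show ?thesis .
  qed
  have "(\<Sum>H\<in>subspaces_codim d. XH f H)
      = (\<Sum>H\<in>subspaces_codim d. \<Sum>a\<in>UNIV. en f a * (\<Sum>h\<in>H - {vzero}. en f (vadd a h)))"
    by (rule sum.cong[OF refl]) (simp add: XH_alt subspaces_codim_def)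
  also have "\<dots> = (\<Sum>a\<in>UNIV. \<Sum>H\<in>subspaces_codim d. en f a * (\<Sum>h\<in>H - {vzero}. en f (vadd a h)))"
    by (rule sum.swap)
  also have "\<dots> = (\<Sum>a\<in>UNIV. en f a * (\<Sum>H\<in>subspaces_codim d. \<Sum>h\<in>H - {vzero}. en f (vadd a h)))"
    by (simp add: sum_distrib_left)
  also have "\<dots> \<le> (\<Sum>a\<in>UNIV. en f a * (N / 2 ^ d * W))"
    by (intro sum_mono mult_left_mono inner) auto
  also have "\<dots> = (\<Sum>a\<in>UNIV. en f a) * (N / 2 ^ d * W)" by (simp only: sum_distrib_right[symmetric])
  also have "\<dots> = N / 2 ^ d * W\<^sup>2" using W by (simp add: power2_eq_square)
  finally show ?thesis unfolding N_def W_def .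
qed



lemma perH:
  fixes f :: "('n::finite \<Rightarrow> bool) \<Rightarrow> real"
  assumes Hs: "is_subspace H"
    and bij: "bij_betw (\<sigma> H) {1..2^d} (cosets H)"
  shows "(\<Sum>i\<in>{1..min s (2^d)}. zval f (\<sigma> H i)) \<le> sqrt (real s * XH f H)"
proof -
  define I where "I = {1..min s (2^d)}"
  define g where "g C = (\<Sum>b\<in>C. en f b * (energy f C - en f b))" for C :: "('n \<Rightarrow> bool) set"
  have Isub: "I \<subseteq> {1..2^d}" unfolding I_def by auto
  have inj: "inj_on (\<sigma> H) I" using bij Isub unfolding bij_betw_def by (metis inj_on_subset)
  have img: "\<sigma> H ` I \<subseteq> cosets H" using bij Isub unfolding bij_betw_def by auto
  have ne: "C \<noteq> {}" if CH: "C \<in> cosets H" for C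
  proof -
    obtain c where "C = coset c H" using CH unfolding cosets_def by blast
    then have "c \<in> C" unfolding coset_def using sub_zero[OF Hs] by (auto intro: image_eqI[where x=vzero])
    then show ?thesis by auto
  qed
  have zg: "(zval f C)\<^sup>2 \<le> g C" if "C \<in> cosets H" for C unfolding g_def using zval_sq ne[OF that] by blast
  have "(\<Sum>i\<in>I. (zval f (\<sigma> H i))\<^sup>2) = (\<Sum>C\<in>\<sigma> H ` I. (zval f C)\<^sup>2)"
    using sum.reindex[OF inj, where g="\<lambda>C. (zval f C)\<^sup>2"] by (simp add: comp_def)
  also have "\<dots> \<le> (\<Sum>C\<in>\<sigma> H ` I. g C)" using img zg by (intro sum_mono) auto
  also have "\<dots> \<le> (\<Sum>C\<in>cosets H. g C)"
    using img zg by (intro sum_mono2) (auto intro: order_trans[OF zero_le_power2])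
  also have "\<dots> = XH f H" unfolding g_def by (rule cosets_sum[OF Hs])
  finally have sq: "(\<Sum>i\<in>I. (zval f (\<sigma> H i))\<^sup>2) \<le> XH f H" .
  have cI: "real (card I) \<le> real s" unfolding I_def by simp
  have "(\<Sum>i\<in>I. zval f (\<sigma> H i))\<^sup>2 \<le> (\<Sum>i\<in>I. (zval f (\<sigma> H i))\<^sup>2) * card I"
    by (rule sum_squared_le_sum_of_squares)
  also have "\<dots> \<le> XH f H * s"
    using sq cI XH_nonneg[OF Hs] by (intro mult_mono) auto
  finally show ?thesis unfolding I_def[symmetric] by (intro real_le_rsqrt) (simp add: mult.commute)
qed

theorem lemma3p1:
  fixes f :: "('n::finite \<Rightarrow> bool) \<Rightarrow> real"
    and s d :: nat
    and \<sigma> :: "('n \<Rightarrow> bool) set \<Rightarrow> nat \<Rightarrow> ('n \<Rightarrow> bool) set"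
  assumes "s \<ge> 1"
    and "d \<le> CARD('n)"
    and "\<forall>H\<in>subspaces_codim d. bij_betw (\<sigma> H) {1..2^d} (cosets H)"
    and "\<forall>H\<in>subspaces_codim d. \<forall>i j. 1 \<le> i \<longrightarrow> i \<le> j \<longrightarrow> j \<le> 2^d \<longrightarrow>
           energy f (\<sigma> H j) \<le> energy f (\<sigma> H i)"
  shows "(\<Sum>H\<in>subspaces_codim d. \<Sum>i\<in>{1..min s (2^d)}. zval f (\<sigma> H i))
           / real (card (subspaces_codim d :: ('n \<Rightarrow> bool) set set))
         \<le> sqrt (2 * real s / 2 ^ d) * norm2sq f"
proof -
  define S where "S = (subspaces_codim d :: ('n \<Rightarrow> bool) set set)"
  define N where "N = real (card S)"
  define W where "W = norm2sq f"
  define T where "T = (\<Sum>H\<in>S. \<Sum>i\<in>{1..min s (2^d)}. zval f (\<sigma> H i))"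
  define Q where "Q = (\<Sum>H\<in>S. sqrt (real s * XH f H))"
  have W0: "0 \<le> W" unfolding W_def norm2sq_def by (intro mult_nonneg_nonneg sum_nonneg) auto
  have R0: "0 \<le> sqrt (2 * real s / 2 ^ d) * W" using W0 by simp
  show ?thesis
  proof (cases "S = {}")
    case True
    then show ?thesis using R0 unfolding S_def W_def by simp
  next
    case False
    then have Npos: "N > 0" unfolding N_def by (simp add: card_gt_0_iff)
    have sub: "is_subspace H" if "H \<in> S" for H using that unfolding S_def subspaces_codim_def by auto
    have TQ: "T \<le> Q" unfolding T_def Q_def
      using perH sub assms(3) unfolding S_def by (intro sum_mono) blast
    have Q0: "0 \<le> Q" unfolding Q_def using XH_nonneg[OF sub] by (intro sum_nonneg) simp
    have "Q\<^sup>2 \<le> (\<Sum>H\<in>S. (sqrt (real s * XH f H))\<^sup>2) * N"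
      unfolding Q_def N_def by (rule sum_squared_le_sum_of_squares)
    also have "(\<Sum>H\<in>S. (sqrt (real s * XH f H))\<^sup>2) = real s * (\<Sum>H\<in>S. XH f H)"
    proof -
      have "(sqrt (real s * XH f H))\<^sup>2 = real s * XH f H" if "H \<in> S" for H
        using XH_nonneg[OF sub[OF that]] by simp
      then show ?thesis by (simp add: sum_distrib_left)
    qed
    also have "real s * (\<Sum>H\<in>S. XH f H) \<le> real s * (N / 2 ^ d * W\<^sup>2)"
      using sumH_XH[OF assms(2), of f] unfolding S_def N_def W_def by (intro mult_left_mono) auto
    finally have "Q\<^sup>2 \<le> real s * (N / 2 ^ d * W\<^sup>2) * N" using Npos by simp
    also have "\<dots> = (N * W)\<^sup>2 * (real s / 2 ^ d)" by (simp add: power2_eq_square)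
    finally have "Q \<le> sqrt ((N * W)\<^sup>2 * (real s / 2 ^ d))" by (rule real_le_rsqrt)
    also have "\<dots> = N * W * sqrt (real s / 2 ^ d)"
      using Npos W0 by (simp only: real_sqrt_mult real_sqrt_abs abs_of_nonneg mult_nonneg_nonneg less_imp_le)
    finally have "T \<le> N * (W * sqrt (real s / 2 ^ d))" using TQ by simp
    then have "T / N \<le> W * sqrt (real s / 2 ^ d)" using Npos by (simp add: field_simps)
    also have "\<dots> \<le> W * sqrt (2 * real s / 2 ^ d)"
      using W0 by (intro mult_left_mono) (auto intro: divide_right_mono)
    finally show ?thesis unfolding T_def N_def S_def W_def by (simp add: mult.commute)
  qed
qed

end
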